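(* Let $\mathcal{K}$ be a statistical $\mathcal{ALC}$ knowledge base and $C,D$ $\mathcal{ALC}$ concepts with $\mathcal{K} \models_p (C \mid D)[m,M]$. Then for every $x$ with $m < x < M$ and every $\epsilon > 0$ there is $\mathcal{I}_{x,\epsilon} \in \mathrm{Mod}(\mathcal{K})$ with $[D]^{\mathcal{I}_{x,\epsilon}} > 0$ and $$\left| \frac{[C \sqcap D]^{\mathcal{I}_{x,\epsilon}}}{[D]^{\mathcal{I}_{x,\epsilon}}} - x \right| < \epsilon .$$
   Context: $\mathcal{ALC}$ concepts over disjoint sets $N_C$, $N_R$: $C ::= \top \mid A \mid \neg C \mid C \sqcap C \mid \exists r.C$, standard semantics. Interpretations $\mathcal{I} = (\Delta^{\mathcal{I}}, \cdot^{\mathcal{I}})$ have non-empty finite domain; $[X]^{\mathcal{I}} := |X^{\mathcal{I}}|$. A conditional is $(C \mid D)[\ell,u]$ with concepts $C,D$ and rationals $0 \le \ell \le u \le 1$; $\mathcal{I} \models (C \mid D)[\ell,u]$ iff $[D]^{\mathcal{I}} = 0$ or $[C \sqcap D]^{\mathcal{I}}/[D]^{\mathcal{I}} \in [\ell,u]$. A statistical $\mathcal{ALC}$ knowledge base $\mathcal{K}$ is a finite set of conditionals; $\mathrm{Mod}(\mathcal{K})$ is the set of finite interpretations satisfying all of them. p-entailment: if there is some $\mathcal{I} \in \mathrm{Mod}(\mathcal{K})$ with $[D]^{\mathcal{I}} > 0$, then $\mathcal{K} \models_p (C \mid D)[m,M]$ where $m = \inf$ and $M = \sup$ of $[C \sqcap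 D]^{\mathcal{I}}/[D]^{\mathcal{I}}$ over all $\mathcal{I} \in \mathrm{Mod}(\mathcal{K})$ with $[D]^{\mathcal{I}} > 0$. *)

theory Defs
  imports Complex_Main
begin

datatype ('c, 'r) concept =
    Top
  | Atom 'c
  | Neg "('c, 'r) concept"
  | Conj "('c, 'r) concept" "('c, 'r) concept"
  | Ex 'r "('c, 'r) concept"

text \<open>Interpretations: domain elements are natural numbers (every finite
  interpretation is isomorphic to one of these); the domain is a finite
  non-empty set.\<close>
record ('c, 'r) interp =
  dom :: "nat set"
  cint :: "'c \<Rightarrow> nat set"
  rint :: "'r \<Rightarrow> (nat \<times> nat) set"

definition valid_interp :: "('c, 'r) interp \<Rightarrow> bool" where
  "valid_interp I \<longleftrightarrow> finite (dom I) \<and> dom I \<noteq> {} \<and>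
     (\<forall>A. cint I A \<subseteq> dom I) \<and> (\<forall>r. rint I r \<subseteq> dom I \<times> dom I)"

fun ext :: "('c, 'r) interp \<Rightarrow> ('c, 'r) concept \<Rightarrow> nat set" where
  "ext I Top = dom I"
| "ext I (Atom A) = cint I A"
| "ext I (Neg C) = dom I - ext I C"
| "ext I (Conj C D) = ext I C \<inter> ext I D"
| "ext I (Ex r C) = {x \<in> dom I. \<exists>y. (x, y) \<in> rint I r \<and> y \<in> ext I C}"

definition cnt :: "('c, 'r) interp \<Rightarrow> ('c, 'r) concept \<Rightarrow> nat" where
  "cnt I C = card (ext I C)"

record ('c, 'r) conditional =
  ccons :: "('c, 'r) concept"
  cante :: "('c, 'r) concept"
  lower :: rat
  upper :: rat

definition wf_conditional :: "('c, 'r) conditional \<Rightarrow> bool" where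
  "wf_conditional c \<longleftrightarrow> 0 \<le> lower c \<and> lower c \<le> upper c \<and> upper c \<le> 1"

definition sat_cond :: "('c, 'r) interp \<Rightarrow> ('c, 'r) conditional \<Rightarrow> bool" where
  "sat_cond I c \<longleftrightarrow> cnt I (cante c) = 0 \<or>
     (let q = real (cnt I (Conj (ccons c) (cante c))) / real (cnt I (cante c))
      in real_of_rat (lower c) \<le> q \<and> q \<le> real_of_rat (upper c))"

type_synonym ('c, 'r) kb = "('c, 'r) conditional set"

definition wf_kb :: "('c, 'r) kb \<Rightarrow> bool" where
  "wf_kb K \<longleftrightarrow> finite K \<and> (\<forall>c\<in>K. wf_conditional c)"

definition Mod :: "('c, 'r) kb \<Rightarrow> ('c, 'r) interp set" where
  "Mod K = {I. valid_interp I \<and> (\<forall>c\<in>K. sat_cond I c)}"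

definition ratios :: "('c, 'r) kb \<Rightarrow> ('c, 'r) concept \<Rightarrow> ('c, 'r) concept \<Rightarrow> real set" where
  "ratios K C D = {real (cnt I (Conj C D)) / real (cnt I D) | I. I \<in> Mod K \<and> cnt I D > 0}"

definition p_entails :: "('c, 'r) kb \<Rightarrow> ('c, 'r) concept \<Rightarrow> ('c, 'r) concept \<Rightarrow> real \<Rightarrow> real \<Rightarrow> bool" where
  "p_entails K C D m M \<longleftrightarrow> (\<exists>I\<in>Mod K. cnt I D > 0) \<and>
     m = Inf (ratios K C D) \<and> M = Sup (ratios K C D)"

end

theory Submission
  imports Defs
begin

definition img :: "(nat \<Rightarrow> nat) \<Rightarrow> ('c,'r) interp \<Rightarrow> ('c,'r) interp" where
  "img f I = \<lparr>dom = f ` dom I, cint = \<lambda>A. f ` cint I A, rint = \<lambda>r. map_prod f f ` rint I r\<rparr>"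

definition uni :: "('c,'r) interp \<Rightarrow> ('c,'r) interp \<Rightarrow> ('c,'r) interp" where
  "uni I J = \<lparr>dom = dom I \<union> dom J, cint = \<lambda>A. cint I A \<union> cint J A, rint = \<lambda>r. rint I r \<union> rint J r\<rparr>"

lemma ext_img: "inj f \<Longrightarrow> ext (img f I) C = f ` ext I C"
proof (induction C)
  case (Neg C) then show ?case by (simp add: img_def image_set_diff)
next
  case (Conj C1 C2) then show ?case by (simp add: image_Int)
next
  case (Ex r C)
  show ?case
  proof
    show "ext (img f I) (concept.Ex r C) \<subseteq> f ` ext I (concept.Ex r C)"
      using Ex by (auto simp: img_def inj_eq) (metis (mono_tags, lifting) imageI mem_Collect_eq injD)
    show "f ` ext I (concept.Ex r C) \<subseteq> ext (img f I) (concept.Ex r C)"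
      using Ex by (auto simp: img_def)
  qed
qed (auto simp: img_def)

lemma ext_sub: "valid_interp I \<Longrightarrow> ext I C \<subseteq> dom I"
  by (induction C) (auto simp: valid_interp_def)

lemma ext_uni:
  assumes "valid_interp I" "valid_interp J" "dom I \<inter> dom J = {}"
  shows "ext (uni I J) C = ext I C \<union> ext J C"
proof (induction C)
  case (Neg C)
  then show ?case using ext_sub[OF assms(1), of C] ext_sub[OF assms(2), of C] assms(3)
    by (auto simp: uni_def)
next
  case (Conj C1 C2)
  then show ?case using ext_sub[OF assms(1), of C1] ext_sub[OF assms(2), of C2]
     ext_sub[OF assms(1), of C2] ext_sub[OF assms(2), of C1] assms(3) by auto
next
  case (Ex r C)
  have rI: "rint I r \<subseteq> dom I \<times> dom I" and rJ: "rint J r \<subseteq> dom J \<times> dom J"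
    using assms(1,2) by (auto simp: valid_interp_def)
  show ?case using Ex rI rJ ext_sub[OF assms(1), of C] ext_sub[OF assms(2), of C] assms(3)
    by (auto simp: uni_def)
qed (auto simp: uni_def)

lemma valid_img: "inj f \<Longrightarrow> valid_interp I \<Longrightarrow> valid_interp (img f I)"
  by (auto simp: valid_interp_def img_def) blast+

lemma valid_uni: "valid_interp I \<Longrightarrow> valid_interp J \<Longrightarrow> valid_interp (uni I J)"
  by (auto simp: valid_interp_def uni_def)

lemma finite_ext: "valid_interp I \<Longrightarrow> finite (ext I C)"
  using ext_sub finite_subset valid_interp_def by metis

lemma cnt_img: "inj f \<Longrightarrow> cnt (img f I) C = cnt I C"
  by (simp add: cnt_def ext_img card_image inj_on_subset)

lemma cnt_uni:
  assumes "valid_interp I" "valid_interp J" "dom I \<inter> dom J = {}"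
  shows "cnt (uni I J) C = cnt I C + cnt J C"
proof -
  have "ext I C \<inter> ext J C = {}" using ext_sub[OF assms(1)] ext_sub[OF assms(2)] assms(3) by blast
  then show ?thesis unfolding cnt_def ext_uni[OF assms]
    by (simp add: card_Un_disjoint finite_ext assms)
qed

definition ev :: "nat \<Rightarrow> nat" where "ev n = 2*n"
definition od :: "nat \<Rightarrow> nat" where "od n = 2*n+1"

lemma inj_ev: "inj ev" by (auto simp: inj_def ev_def)
lemma inj_od: "inj od" by (auto simp: inj_def od_def)
lemma disj: "dom (img ev I) \<inter> dom (img od J) = {}"
  by (auto simp: img_def ev_def od_def) presburger

definition comb where "comb I J = uni (img ev I) (img od J)"

lemma valid_comb: "valid_interp I \<Longrightarrow> valid_interp J \<Longrightarrow> valid_interp (comb I J)"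
  by (simp add: comb_def valid_uni valid_img inj_ev inj_od)

lemma cnt_comb: "valid_interp I \<Longrightarrow> valid_interp J \<Longrightarrow> cnt (comb I J) C = cnt I C + cnt J C"
  unfolding comb_def
  by (subst cnt_uni) (simp_all add: valid_img inj_ev inj_od disj cnt_img)

fun rep :: "nat \<Rightarrow> ('c,'r) interp \<Rightarrow> ('c,'r) interp" where
  "rep 0 I = I"
| "rep (Suc k) I = comb I (rep k I)"

lemma rep_prop: "valid_interp I \<Longrightarrow> valid_interp (rep k I) \<and> (\<forall>C. cnt (rep k I) C = (k+1) * cnt I C)"
  by (induction k) (auto simp: valid_comb cnt_comb)

lemma sat_iff:
  assumes "valid_interp I"
  shows "sat_cond I c \<longleftrightarrow>
    (real_of_rat (lower c) * real (cnt I (cante c)) \<le> real (cnt I (Conj (ccons c) (cante c))) \<and>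
     real (cnt I (Conj (ccons c) (cante c))) \<le> real_of_rat (upper c) * real (cnt I (cante c)))"
proof (cases "cnt I (cante c) = 0")
  case True
  have "cnt I (Conj (ccons c) (cante c)) \<le> cnt I (cante c)"
    unfolding cnt_def by (rule card_mono) (auto simp: finite_ext assms)
  then show ?thesis using True by (simp add: sat_cond_def)
next
  case False
  then have q: "real (cnt I (cante c)) > 0" by simp
  show ?thesis using False unfolding sat_cond_def Let_def
    by (simp add: le_divide_eq divide_le_eq q)
qed

lemma cnt_le: "valid_interp I \<Longrightarrow> cnt I (Conj C D) \<le> cnt I D"
  unfolding cnt_def by (rule card_mono) (auto simp: finite_ext)

lemma combo:
  assumes I1: "I1 \<in> Mod K" and I2: "I2 \<in> Mod K"
  shows "comb (rep a I1) (rep b I2) \<in> Mod K \<and>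
    (\<forall>E. cnt (comb (rep a I1) (rep b I2)) E = (a+1) * cnt I1 E + (b+1) * cnt I2 E)"
proof -
  have v1: "valid_interp I1" and v2: "valid_interp I2" using I1 I2 by (auto simp: Mod_def)
  note r1 = rep_prop[OF v1, of a] and r2 = rep_prop[OF v2, of b]
  have vJ: "valid_interp (comb (rep a I1) (rep b I2))" using r1 r2 valid_comb by blast
  have cJ: "\<forall>E. cnt (comb (rep a I1) (rep b I2)) E = (a+1) * cnt I1 E + (b+1) * cnt I2 E"
    using r1 r2 by (simp add: cnt_comb)
  have "sat_cond (comb (rep a I1) (rep b I2)) c" if c: "c \<in> K" for c
  proof -
    let ?l = "real_of_rat (lower c)" and ?u = "real_of_rat (upper c)"
    let ?p1 = "real (cnt I1 (Conj (ccons c) (cante c)))" and ?q1 = "real (cnt I1 (cante c))"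
    let ?p2 = "real (cnt I2 (Conj (ccons c) (cante c)))" and ?q2 = "real (cnt I2 (cante c))"
    have s1: "?l * ?q1 \<le> ?p1 \<and> ?p1 \<le> ?u * ?q1"
      using I1 c sat_iff[OF v1] by (auto simp: Mod_def)
    have s2: "?l * ?q2 \<le> ?p2 \<and> ?p2 \<le> ?u * ?q2"
      using I2 c sat_iff[OF v2] by (auto simp: Mod_def)
    have A: "real (a+1) * (?l * ?q1) \<le> real (a+1) * ?p1" "real (a+1) * ?p1 \<le> real (a+1) * (?u * ?q1)"
      using s1 by (auto intro: mult_left_mono)
    have B: "real (b+1) * (?l * ?q2) \<le> real (b+1) * ?p2" "real (b+1) * ?p2 \<le> real (b+1) * (?u * ?q2)"
      using s2 by (auto intro: mult_left_mono)
    show ?thesis unfolding sat_iff[OF vJ] cJ[rule_format] using A B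
      by (simp add: algebra_simps)
  qed
  then show ?thesis using vJ cJ by (auto simp: Mod_def)
qed


lemma approx:
  fixes p1 q1 p2 q2 x \<epsilon> :: real
  assumes q1: "q1 > 0" and q2: "q2 > 0" and lo: "p1 / q1 < x" and hi: "x < p2 / q2" and e: "\<epsilon> > 0"
  shows "\<exists>(a::nat) (b::nat). \<bar>((a+1) * p1 + (b+1) * p2) / ((a+1) * q1 + (b+1) * q2) - x\<bar> < \<epsilon>"
proof -
  define \<alpha> where "\<alpha> = p2 - x * q2"
  define \<beta> where "\<beta> = x * q1 - p1"
  have a0: "\<alpha> \<ge> 0" using hi q2 by (simp add: \<alpha>_def field_simps)
  have b0: "\<beta> > 0" using lo q1 by (simp add: \<beta>_def field_simps)
  define \<Delta> where "\<Delta> = \<alpha> * q1 + \<beta> * q2"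
  have d0: "\<Delta> > 0" using a0 b0 q1 q2 by (simp add: \<Delta>_def add_nonneg_pos)
  have zero: "\<alpha> * p1 + \<beta> * p2 - x * \<Delta> = 0" by (simp add: \<alpha>_def \<beta>_def \<Delta>_def algebra_simps)
  define K0 where "K0 = \<bar>p1 - x * q1\<bar> + \<bar>p2 - x * q2\<bar> + 1"
  have k0: "K0 > 0" by (simp add: K0_def add_nonneg_pos)
  obtain n :: nat where n: "K0 / (\<Delta> * \<epsilon>) < real n" using reals_Archimedean2 by blast
  have npos: "real n > 0" using n k0 d0 e
    by (smt (verit) divide_pos_pos mult_pos_pos)
  define a where "a = nat \<lfloor>n * \<alpha>\<rfloor>"
  define b where "b = nat \<lfloor>n * \<beta>\<rfloor>"
  define A where "A = real a + 1"
  define B where "B = real b + 1"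
  have na: "n * \<alpha> \<ge> 0" using a0 npos by simp
  have nb: "n * \<beta> \<ge> 0" using b0 npos by simp
  have "real (nat \<lfloor>n * \<alpha>\<rfloor>) = of_int \<lfloor>n * \<alpha>\<rfloor>" using na by simp
  then have A1: "n * \<alpha> \<le> A" "A - n * \<alpha> \<le> 1" unfolding A_def a_def
    using of_int_floor_le[of "n * \<alpha>"] real_of_int_floor_add_one_gt[of "n * \<alpha>"] by linarith+
  have "real (nat \<lfloor>n * \<beta>\<rfloor>) = of_int \<lfloor>n * \<beta>\<rfloor>" using nb by simp
  then have B1: "n * \<beta> \<le> B" "B - n * \<beta> \<le> 1" unfolding B_def b_def
    using of_int_floor_le[of "n * \<beta>"] real_of_int_floor_add_one_gt[of "n * \<beta>"] by linarith+
  define Den where "Den = A * q1 + B * q2"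
  define Num where "Num = A * p1 + B * p2"
  have "Den \<ge> n * \<alpha> * q1 + n * \<beta> * q2" unfolding Den_def using A1 B1 q1 q2
    by (intro add_mono mult_right_mono) auto
  then have den: "Den \<ge> n * \<Delta>" by (simp add: \<Delta>_def algebra_simps)
  have dpos: "Den > 0" using den npos d0 by (smt (verit) mult_pos_pos)
  have eq: "Num - x * Den = (A - n*\<alpha>) * (p1 - x*q1) + (B - n*\<beta>) * (p2 - x*q2) + n * (\<alpha> * p1 + \<beta> * p2 - x * \<Delta>)"
    by (simp add: Num_def Den_def \<Delta>_def algebra_simps)
  have t1: "\<bar>(A - n*\<alpha>) * (p1 - x*q1)\<bar> \<le> \<bar>p1 - x*q1\<bar>"
    using A1 by (simp add: abs_mult mult_left_le_one_le)
  have t2: "\<bar>(B - n*\<beta>) * (p2 - x*q2)\<bar> \<le> \<bar>p2 - x*q2\<bar>"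
    using B1 by (simp add: abs_mult mult_left_le_one_le)
  have bnd: "\<bar>Num - x * Den\<bar> < K0" unfolding eq zero K0_def using t1 t2 by linarith
  have "\<bar>Num / Den - x\<bar> = \<bar>Num - x * Den\<bar> / Den" using dpos
    by (simp add: field_simps)
  also have "\<dots> < K0 / Den" using bnd dpos by (simp add: divide_strict_right_mono)
  also have "\<dots> \<le> K0 / (n * \<Delta>)" using den npos d0 k0 dpos
    by (intro divide_left_mono) (auto intro: mult_pos_pos)
  also have "\<dots> < \<epsilon>" using n npos d0 e k0 by (simp add: field_simps mult.commute)
  finally have "\<bar>Num / Den - x\<bar> < \<epsilon>" .
  then show ?thesis unfolding Num_def Den_def A_def B_def by (intro exI[of _ a] exI[of _ b]) simp
qed

theorem proposition3:
  fixes K :: "('c, 'r) kb" and C D :: "('c, 'r) concept" and m M :: real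
  assumes "wf_kb K"
    and "p_entails K C D m M"
  shows "\<forall>x \<epsilon>. m < x \<and> x < M \<and> \<epsilon> > 0 \<longrightarrow>
           (\<exists>I\<in>Mod K. cnt I D > 0 \<and>
              \<bar>real (cnt I (Conj C D)) / real (cnt I D) - x\<bar> < \<epsilon>)"
proof (intro allI impI)
  fix x \<epsilon> :: real
  assume xe: "m < x \<and> x < M \<and> \<epsilon> > 0"
  let ?S = "ratios K C D"
  have ne: "?S \<noteq> {}" using assms(2) by (auto simp: p_entails_def ratios_def)
  have bd: "\<forall>s\<in>?S. 0 \<le> s \<and> s \<le> 1"
    by (auto simp: ratios_def Mod_def cnt_le divide_le_eq)
  have bb: "bdd_below ?S" "bdd_above ?S" using bd by (auto intro!: bdd_belowI bdd_aboveI)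
  have "\<exists>s\<in>?S. s < x" using xe assms(2) cInf_less_iff[OF ne bb(1)] by (simp add: p_entails_def)
  then obtain I1 where I1: "I1 \<in> Mod K" "cnt I1 D > 0" "real (cnt I1 (Conj C D)) / real (cnt I1 D) < x"
    by (auto simp: ratios_def)
  have "\<exists>s\<in>?S. x < s" using xe assms(2) less_cSup_iff[OF ne bb(2)] by (simp add: p_entails_def)
  then obtain I2 where I2: "I2 \<in> Mod K" "cnt I2 D > 0" "x < real (cnt I2 (Conj C D)) / real (cnt I2 D)"
    by (auto simp: ratios_def)
  obtain a b :: nat where ab: "\<bar>((a+1) * real (cnt I1 (Conj C D)) + (b+1) * real (cnt I2 (Conj C D)))
       / ((a+1) * real (cnt I1 D) + (b+1) * real (cnt I2 D)) - x\<bar> < \<epsilon>"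
  proof -
    have "\<exists>(a::nat) (b::nat). \<bar>((a+1) * real (cnt I1 (Conj C D)) + (b+1) * real (cnt I2 (Conj C D)))
       / ((a+1) * real (cnt I1 D) + (b+1) * real (cnt I2 D)) - x\<bar> < \<epsilon>"
      by (rule approx) (use I1 I2 xe in auto)
    then obtain a b :: nat where h: "\<bar>((real a+1) * real (cnt I1 (Conj C D)) + (real b+1) * real (cnt I2 (Conj C D)))
       / ((real a+1) * real (cnt I1 D) + (real b+1) * real (cnt I2 D)) - x\<bar> < \<epsilon>" by blast
    show ?thesis by (rule that[of a b]) (use h in \<open>simp add: add.commute\<close>)
  qed
  note cb = combo[OF I1(1) I2(1), of a b]
  show "\<exists>I\<in>Mod K. cnt I D > 0 \<and> \<bar>real (cnt I (Conj C D)) / real (cnt I D) - x\<bar> < \<epsilon>"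
    apply (rule bexI[of _ "comb (rep a I1) (rep b I2)"])
    using cb ab I1(2) by (auto simp: distrib_right algebra_simps)
qed

end
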